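(* Let $\Bbbk$ be a field with $\operatorname{char}\Bbbk\neq 2$, and let $H_4^{(-)}$ be the Lie algebra defined in the context, with basis $1,g,e,f$. Let $L$ be a three-dimensional non-abelian Lie subalgebra of $H_4^{(-)}$. Then $L=\operatorname{span}(\alpha 1+g,e,f)$ for some $\alpha\in\Bbbk$, or $L=\operatorname{span}(1,g+\gamma e,f)$ for some $\gamma\in\Bbbk$, or $L=\operatorname{span}(1,g+\gamma f,e)$ for some $\gamma\in\Bbbk$. If moreover $L$ is an ideal of $H_4^{(-)}$, then $L=I:=\Bbbk 1+\Bbbk e+\Bbbk f$ or $L=J_\alpha:=\Bbbk(\alpha 1+g)+\Bbbk e+\Bbbk f$ for some $\alpha\in\Bbbk$.
   Context: $H_4$ is the Sweedler algebra over $\Bbbk$: the 4-dimensional associative unital algebra generated by $g,x$ with relations $g^2=1$, $x^2=0$, $xg=-gx$, with basis $1,g,x,gx$. $H_4^{(-)}$ is the Lie algebra on the vector space $H_4$ with bracket $[a,b]=ab-ba$. Put $e=x+gx$ and $f=x-gx$; then $1,g,e,f$ is a basis of $H_4$ and $[1,g]=[1,e]=[1,f]=0$, $[g,e]=2e$, $[g,f]=-2f$, $[e,f]=0$. *)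

theory Defs
  imports Main
begin

text \<open>The Sweedler algebra H4 over a field 'k, elements written in the basis 1, g, x, gx:
  H4c a b c d = a*1 + b*g + c*x + d*gx.\<close>

datatype 'k h4 = H4c 'k 'k 'k 'k

fun h4_add :: "'k::field h4 \<Rightarrow> 'k h4 \<Rightarrow> 'k h4" where
  "h4_add (H4c a b c d) (H4c a' b' c' d') = H4c (a + a') (b + b') (c + c') (d + d')"

fun h4_smult :: "'k::field \<Rightarrow> 'k h4 \<Rightarrow> 'k h4" where
  "h4_smult s (H4c a b c d) = H4c (s * a) (s * b) (s * c) (s * d)"

definition h4_zero :: "'k::field h4" where
  "h4_zero = H4c 0 0 0 0"

text \<open>Multiplication derived from g^2 = 1, x^2 = 0, xg = -gx (so g(gx) = x, (gx)g = -x,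
  x(gx) = (gx)x = (gx)(gx) = 0).\<close>
fun h4_mult :: "'k::field h4 \<Rightarrow> 'k h4 \<Rightarrow> 'k h4" where
  "h4_mult (H4c a b c d) (H4c a' b' c' d') =
     H4c (a * a' + b * b')
         (a * b' + b * a')
         (a * c' + c * a' + b * d' - d * b')
         (a * d' + d * a' + b * c' - c * b')"

definition h4_bracket :: "'k::field h4 \<Rightarrow> 'k h4 \<Rightarrow> 'k h4" where
  "h4_bracket u v = h4_add (h4_mult u v) (h4_smult (-1) (h4_mult v u))"

definition h4_one :: "'k::field h4" where "h4_one = H4c 1 0 0 0"
definition h4_g :: "'k::field h4" where "h4_g = H4c 0 1 0 0"
definition h4_x :: "'k::field h4" where "h4_x = H4c 0 0 1 0"
definition h4_gx :: "'k::field h4" where "h4_gx = H4c 0 0 0 1"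

definition h4_e :: "'k::field h4" where "h4_e = h4_add h4_x h4_gx"
definition h4_f :: "'k::field h4" where "h4_f = h4_add h4_x (h4_smult (-1) h4_gx)"

definition span3 :: "'k::field h4 \<Rightarrow> 'k h4 \<Rightarrow> 'k h4 \<Rightarrow> 'k h4 set" where
  "span3 u v w = {h4_add (h4_add (h4_smult \<alpha> u) (h4_smult \<beta> v)) (h4_smult \<gamma> w) | \<alpha> \<beta> \<gamma>. True}"

definition lin_indep3 :: "'k::field h4 \<Rightarrow> 'k h4 \<Rightarrow> 'k h4 \<Rightarrow> bool" where
  "lin_indep3 u v w \<longleftrightarrow> (\<forall>\<alpha> \<beta> \<gamma>.
     h4_add (h4_add (h4_smult \<alpha> u) (h4_smult \<beta> v)) (h4_smult \<gamma> w) = h4_zero \<longrightarrow>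
     \<alpha> = 0 \<and> \<beta> = 0 \<and> \<gamma> = 0)"

definition dim3_subspace :: "'k::field h4 set \<Rightarrow> bool" where
  "dim3_subspace L \<longleftrightarrow> (\<exists>u v w. lin_indep3 u v w \<and> L = span3 u v w)"

definition lie_subalgebra :: "'k::field h4 set \<Rightarrow> bool" where
  "lie_subalgebra L \<longleftrightarrow> h4_zero \<in> L \<and>
     (\<forall>u\<in>L. \<forall>v\<in>L. h4_add u v \<in> L) \<and>
     (\<forall>s. \<forall>u\<in>L. h4_smult s u \<in> L) \<and>
     (\<forall>u\<in>L. \<forall>v\<in>L. h4_bracket u v \<in> L)"

definition non_abelian :: "'k::field h4 set \<Rightarrow> bool" where
  "non_abelian L \<longleftrightarrow> (\<exists>u\<in>L. \<exists>v\<in>L. h4_bracket u v \<noteq> h4_zero)"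

definition lie_ideal :: "'k::field h4 set \<Rightarrow> bool" where
  "lie_ideal L \<longleftrightarrow> lie_subalgebra L \<and> (\<forall>h. \<forall>u\<in>L. h4_bracket h u \<in> L)"

end

theory Submission
  imports Defs
begin

lemma br: "h4_bracket (H4c a b c d) (H4c a' b' c' d' :: 'k::field h4) = H4c 0 0 (2*(b*d' - d*b')) (2*(b*c' - c*b'))"
  by (simp add: h4_bracket_def algebra_simps mult_2)

lemma span3_H: "span3 (H4c u1 u2 u3 u4) (H4c v1 v2 v3 v4) (H4c w1 w2 w3 w4 :: 'k::field h4) =
  {H4c (\<alpha>*u1+\<beta>*v1+\<gamma>*w1) (\<alpha>*u2+\<beta>*v2+\<gamma>*w2) (\<alpha>*u3+\<beta>*v3+\<gamma>*w3) (\<alpha>*u4+\<beta>*v4+\<gamma>*w4) | \<alpha> \<beta> \<gamma>. True}"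
  by (simp add: span3_def)

lemma B0: "\<exists>\<alpha> \<beta> \<gamma>::'k::field. \<not>(\<alpha>=0\<and>\<beta>=0\<and>\<gamma>=0) \<and> \<alpha>*p1+\<beta>*q1+\<gamma>*r1 = 0 \<and> \<alpha>*p2+\<beta>*q2+\<gamma>*r2 = 0"
proof (cases "q1*r2 - r1*q2 = 0 \<and> r1*p2 - p1*r2 = 0 \<and> p1*q2 - q1*p2 = 0")
  case False
  then show ?thesis
    by (intro exI[of _ "q1*r2 - r1*q2"] exI[of _ "r1*p2 - p1*r2"] exI[of _ "p1*q2 - q1*p2"])
       (auto simp: algebra_simps)
next
  case True
  show ?thesis
  proof (cases "p1 = 0 \<and> p2 = 0")
    case True then show ?thesis by (intro exI[of _ 1] exI[of _ 0] exI[of _ 0]) simp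
  next
    case F2: False
    show ?thesis
    proof (cases "p1 = 0")
      case False
      then show ?thesis using True
        by (intro exI[of _ q1] exI[of _ "-p1"] exI[of _ 0]) (auto simp: algebra_simps)
    next
      case P: True
      then have "p2 \<noteq> 0" using F2 by simp
      then show ?thesis using True
        by (intro exI[of _ q2] exI[of _ "-p2"] exI[of _ 0]) (auto simp: algebra_simps)
    qed
  qed
qed

definition span2 :: "'k::field h4 \<Rightarrow> 'k h4 \<Rightarrow> 'k h4 set" where
  "span2 a b = {h4_add (h4_smult s a) (h4_smult t b) | s t. True}"

lemma B:
  fixes x y z :: "'k::field h4"
  assumes "lin_indep3 x y z" "x \<in> span2 a b" "y \<in> span2 a b" "z \<in> span2 a b"
  shows False
proof -
  obtain s1 t1 where x: "x = h4_add (h4_smult s1 a) (h4_smult t1 b)" using assms(2) unfolding span2_def by blast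
  obtain s2 t2 where y: "y = h4_add (h4_smult s2 a) (h4_smult t2 b)" using assms(3) unfolding span2_def by blast
  obtain s3 t3 where z: "z = h4_add (h4_smult s3 a) (h4_smult t3 b)" using assms(4) unfolding span2_def by blast
  obtain \<alpha> \<beta> \<gamma> where nt: "\<not>(\<alpha>=0\<and>\<beta>=0\<and>\<gamma>=0)" and e1: "\<alpha>*s1+\<beta>*s2+\<gamma>*s3 = 0" and e2: "\<alpha>*t1+\<beta>*t2+\<gamma>*t3 = 0"
    using B0 by blast
  obtain a1 a2 a3 a4 where a: "a = H4c a1 a2 a3 a4" by (cases a)
  obtain b1 b2 b3 b4 where b: "b = H4c b1 b2 b3 b4" by (cases b)
  have gen: "\<And>ai bi. \<alpha>*(s1*ai+t1*bi) + \<beta>*(s2*ai+t2*bi) + \<gamma>*(s3*ai+t3*bi) = 0"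
  proof -
    fix ai bi
    have "\<alpha>*(s1*ai+t1*bi) + \<beta>*(s2*ai+t2*bi) + \<gamma>*(s3*ai+t3*bi)
       = ai*(\<alpha>*s1+\<beta>*s2+\<gamma>*s3) + bi*(\<alpha>*t1+\<beta>*t2+\<gamma>*t3)" by (simp add: algebra_simps)
    then show "\<alpha>*(s1*ai+t1*bi) + \<beta>*(s2*ai+t2*bi) + \<gamma>*(s3*ai+t3*bi) = 0" using e1 e2 by simp
  qed
  have "h4_add (h4_add (h4_smult \<alpha> x) (h4_smult \<beta> y)) (h4_smult \<gamma> z) = h4_zero"
    unfolding x y z a b h4_zero_def using gen by simp
  then show False using assms(1) nt unfolding lin_indep3_def by blast
qed

lemma A0sub: "(a::'k::field) \<noteq> 0 \<Longrightarrow> a*u + b*v + c*w = 0 \<Longrightarrow> \<alpha>*u + \<beta>*v + \<gamma>*w = (\<beta> - \<alpha>*b/a)*v + (\<gamma> - \<alpha>*c/a)*w"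
proof -
  assume a: "a \<noteq> 0" and h: "a*u + b*v + c*w = 0"
  have "\<alpha>*u + \<beta>*v + \<gamma>*w - ((\<beta> - \<alpha>*b/a)*v + (\<gamma> - \<alpha>*c/a)*w) = (\<alpha>/a)*(a*u + b*v + c*w)"
    using a by (simp add: field_simps)
  then show ?thesis using h by simp
qed

lemma A0:
  fixes u v w :: "'k::field h4"
  assumes a0: "a \<noteq> 0"
    and one: "H4c 1 0 0 0 = h4_add (h4_add (h4_smult a u) (h4_smult b v)) (h4_smult c w)"
    and g: "H4c 0 1 0 0 \<in> span3 u v w" and x: "H4c 0 0 1 0 \<in> span3 u v w" and gx: "H4c 0 0 0 1 \<in> span3 u v w"
  shows False
proof -
  obtain u1 u2 u3 u4 where u: "u = H4c u1 u2 u3 u4" by (cases u)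
  obtain v1 v2 v3 v4 where v: "v = H4c v1 v2 v3 v4" by (cases v)
  obtain w1 w2 w3 w4 where w: "w = H4c w1 w2 w3 w4" by (cases w)
  have o2: "a*u2+b*v2+c*w2 = 0" and o3: "a*u3+b*v3+c*w3 = 0" and o4: "a*u4+b*v4+c*w4 = 0"
    using one unfolding u v w by simp_all
  obtain a2 b2 c2 where g2: "1 = a2*u2+b2*v2+c2*w2" "0 = a2*u3+b2*v3+c2*w3" "0 = a2*u4+b2*v4+c2*w4"
    using g unfolding u v w span3_H by auto
  obtain a3 b3 c3 where g3: "0 = a3*u2+b3*v2+c3*w2" "1 = a3*u3+b3*v3+c3*w3" "0 = a3*u4+b3*v4+c3*w4"
    using x unfolding u v w span3_H by auto
  obtain a4 b4 c4 where g4: "0 = a4*u2+b4*v2+c4*w2" "0 = a4*u3+b4*v3+c4*w3" "1 = a4*u4+b4*v4+c4*w4"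
    using gx unfolding u v w span3_H by auto
  define P2 where "P2 = b2 - a2*b/a"
  define P3 where "P3 = b3 - a3*b/a"
  define P4 where "P4 = b4 - a4*b/a"
  define Q2 where "Q2 = c2 - a2*c/a"
  define Q3 where "Q3 = c3 - a3*c/a"
  define Q4 where "Q4 = c4 - a4*c/a"
  note S = A0sub[OF a0]
  have h2: "1 = P2*v2+Q2*w2" "0 = P2*v3+Q2*w3" "0 = P2*v4+Q2*w4"
    using g2 S[OF o2, of a2 b2 c2] S[OF o3, of a2 b2 c2] S[OF o4, of a2 b2 c2]
    unfolding P2_def Q2_def by simp_all
  have h3: "0 = P3*v2+Q3*w2" "1 = P3*v3+Q3*w3" "0 = P3*v4+Q3*w4"
    using g3 S[OF o2, of a3 b3 c3] S[OF o3, of a3 b3 c3] S[OF o4, of a3 b3 c3]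
    unfolding P3_def Q3_def by simp_all
  have h4: "0 = P4*v2+Q4*w2" "0 = P4*v3+Q4*w3" "1 = P4*v4+Q4*w4"
    using g4 S[OF o2, of a4 b4 c4] S[OF o3, of a4 b4 c4] S[OF o4, of a4 b4 c4]
    unfolding P4_def Q4_def by simp_all
  obtain l2 l3 l4 where nt: "\<not>(l2=0\<and>l3=0\<and>l4=0)" and e1: "l2*P2+l3*P3+l4*P4 = 0" and e2: "l2*Q2+l3*Q3+l4*Q4 = 0"
    using B0 by blast
  have key: "\<And>vi wi. l2*(P2*vi+Q2*wi) + l3*(P3*vi+Q3*wi) + l4*(P4*vi+Q4*wi) = 0"
  proof -
    fix vi wi
    have "l2*(P2*vi+Q2*wi) + l3*(P3*vi+Q3*wi) + l4*(P4*vi+Q4*wi) = vi*(l2*P2+l3*P3+l4*P4) + wi*(l2*Q2+l3*Q3+l4*Q4)"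
      by (simp add: algebra_simps)
    then show "l2*(P2*vi+Q2*wi) + l3*(P3*vi+Q3*wi) + l4*(P4*vi+Q4*wi) = 0" using e1 e2 by simp
  qed
  have "l2 = 0" using key[of v2 w2] h2(1) h3(1) h4(1) by (metis add.right_neutral mult_1_right mult_zero_right)
  moreover have "l3 = 0" using key[of v3 w3] h2(2) h3(2) h4(2) by (metis add.right_neutral add.left_neutral mult_1_right mult_zero_right)
  moreover have "l4 = 0" using key[of v4 w4] h2(3) h3(3) h4(3) by (metis add.left_neutral mult_1_right mult_zero_right)
  ultimately show False using nt by simp
qed

lemma span3_swap12: "span3 u v w = span3 v u (w::'k::field h4)"
proof -
  have e: "\<And>\<alpha> \<beta> \<gamma>. h4_add (h4_add (h4_smult \<alpha> u) (h4_smult \<beta> v)) (h4_smult \<gamma> w)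
      = h4_add (h4_add (h4_smult \<beta> v) (h4_smult \<alpha> u)) (h4_smult \<gamma> w)"
    by (cases u; cases v; cases w) (simp add: ac_simps)
  show ?thesis unfolding span3_def by (auto; metis e)
qed

lemma span3_swap13: "span3 u v w = span3 w v (u::'k::field h4)"
proof -
  have e: "\<And>\<alpha> \<beta> \<gamma>. h4_add (h4_add (h4_smult \<alpha> u) (h4_smult \<beta> v)) (h4_smult \<gamma> w)
      = h4_add (h4_add (h4_smult \<gamma> w) (h4_smult \<beta> v)) (h4_smult \<alpha> u)"
    by (cases u; cases v; cases w) (simp add: ac_simps)
  show ?thesis unfolding span3_def by (auto; metis e)
qed

lemma A:
  fixes u v w :: "'k::field h4"
  assumes "H4c 1 0 0 0 \<in> span3 u v w" "H4c 0 1 0 0 \<in> span3 u v w"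
    "H4c 0 0 1 0 \<in> span3 u v w" "H4c 0 0 0 1 \<in> span3 u v w"
  shows False
proof -
  obtain a b c where one: "H4c 1 0 0 0 = h4_add (h4_add (h4_smult a u) (h4_smult b v)) (h4_smult c w)"
    using assms(1) unfolding span3_def by blast
  show False
  proof (cases "a = 0")
    case False
    then show False using A0[OF False one] assms by blast
  next
    case a: True
    show False
    proof (cases "b = 0")
      case False
      have one': "H4c 1 0 0 0 = h4_add (h4_add (h4_smult b v) (h4_smult a u)) (h4_smult c w)"
        using one by (cases u; cases v; cases w) (simp add: ac_simps)
      show False using A0[OF False one'] assms unfolding span3_swap12[of u v w] by blast
    next
      case b: True
      show False
      proof (cases "c = 0")
        case False
        have one': "H4c 1 0 0 0 = h4_add (h4_add (h4_smult c w) (h4_smult b v)) (h4_smult a u)"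
          using one by (cases u; cases v; cases w) (simp add: ac_simps)
        show False using A0[OF False one'] assms unfolding span3_swap13[of u v w] by blast
      next
        case True
        then show False using one a b by (cases u; cases v; cases w) simp
      qed
    qed
  qed
qed

lemma span3_sub:
  assumes sub: "lie_subalgebra L" and "x \<in> L" "y \<in> L" "z \<in> L"
  shows "span3 x y z \<subseteq> L"
proof -
  have add: "\<And>x y. x\<in>L \<Longrightarrow> y\<in>L \<Longrightarrow> h4_add x y \<in> L" using sub unfolding lie_subalgebra_def by blast
  have sm: "\<And>s x. x\<in>L \<Longrightarrow> h4_smult s x \<in> L" using sub unfolding lie_subalgebra_def by blast
  show ?thesis unfolding span3_def using assms(2-4) add sm by blast
qed

lemma span3_mem: "u \<in> span3 u v (w::'k::field h4)" "v \<in> span3 u v w" "w \<in> span3 u v w"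
proof -
  obtain u1 u2 u3 u4 where u: "u = H4c u1 u2 u3 u4" by (cases u)
  obtain v1 v2 v3 v4 where v: "v = H4c v1 v2 v3 v4" by (cases v)
  obtain w1 w2 w3 w4 where w: "w = H4c w1 w2 w3 w4" by (cases w)
  show "u \<in> span3 u v w" unfolding u v w span3_H by (rule CollectI, rule exI[of _ 1], rule exI[of _ 0], rule exI[of _ 0]) simp
  show "v \<in> span3 u v w" unfolding u v w span3_H by (rule CollectI, rule exI[of _ 0], rule exI[of _ 1], rule exI[of _ 0]) simp
  show "w \<in> span3 u v w" unfolding u v w span3_H by (rule CollectI, rule exI[of _ 0], rule exI[of _ 0], rule exI[of _ 1]) simp
qed

theorem mainTheorem3:
  fixes L :: "'k::field h4 set"
  assumes char: "(2::'k) \<noteq> 0"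
    and sub: "lie_subalgebra L"
    and dim: "dim3_subspace L"
    and nab: "non_abelian L"
  shows "((\<exists>\<alpha>. L = span3 (h4_add (h4_smult \<alpha> h4_one) h4_g) h4_e h4_f)
          \<or> (\<exists>\<gamma>. L = span3 h4_one (h4_add h4_g (h4_smult \<gamma> h4_e)) h4_f)
          \<or> (\<exists>\<gamma>. L = span3 h4_one (h4_add h4_g (h4_smult \<gamma> h4_f)) h4_e))
       \<and> (lie_ideal L \<longrightarrow>
            (L = span3 h4_one h4_e h4_f
             \<or> (\<exists>\<alpha>. L = span3 (h4_add (h4_smult \<alpha> h4_one) h4_g) h4_e h4_f)))"
proof -
  from dim obtain u v w where ind: "lin_indep3 u v w" and Ldef: "L = span3 u v w"
    unfolding dim3_subspace_def by blast
  have uvw: "u \<in> L" "v \<in> L" "w \<in> L" using span3_mem Ldef by auto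
  have add: "\<And>x y. x\<in>L \<Longrightarrow> y\<in>L \<Longrightarrow> h4_add x y \<in> L" using sub unfolding lie_subalgebra_def by blast
  have sm: "\<And>s x. x\<in>L \<Longrightarrow> h4_smult s x \<in> L" using sub unfolding lie_subalgebra_def by blast
  have brk: "\<And>x y. x\<in>L \<Longrightarrow> y\<in>L \<Longrightarrow> h4_bracket x y \<in> L" using sub unfolding lie_subalgebra_def by blast
  have comb: "\<And>a b c d a' b' c' d' \<alpha> \<beta>. H4c a b c d \<in> L \<Longrightarrow> H4c a' b' c' d' \<in> L \<Longrightarrow>
      H4c (\<alpha>*a+\<beta>*a') (\<alpha>*b+\<beta>*b') (\<alpha>*c+\<beta>*c') (\<alpha>*d+\<beta>*d') \<in> L"
  proof -
    fix a b c d a' b' c' d' \<alpha> \<beta>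
    assume "H4c a b c d \<in> L" "H4c a' b' c' d' \<in> L"
    then have "h4_add (h4_smult \<alpha> (H4c a b c d)) (h4_smult \<beta> (H4c a' b' c' d')) \<in> L" using add sm by blast
    then show "H4c (\<alpha>*a+\<beta>*a') (\<alpha>*b+\<beta>*b') (\<alpha>*c+\<beta>*c') (\<alpha>*d+\<beta>*d') \<in> L" by simp
  qed
  have combE: "\<And>a b c d a' b' c' d' \<alpha> \<beta> y. H4c a b c d \<in> L \<Longrightarrow> H4c a' b' c' d' \<in> L \<Longrightarrow>
      y = H4c (\<alpha>*a+\<beta>*a') (\<alpha>*b+\<beta>*b') (\<alpha>*c+\<beta>*c') (\<alpha>*d+\<beta>*d') \<Longrightarrow> y \<in> L"
    using comb by blast
  have brH: "\<And>a b c d a' b' c' d'. H4c a b c d \<in> L \<Longrightarrow> H4c a' b' c' d' \<in> L \<Longrightarrow>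
      H4c 0 0 (2*(b*d' - d*b')) (2*(b*c' - c*b')) \<in> L"
    using brk br by metis
  obtain pa pc pd where pL: "H4c pa 1 pc pd \<in> L"
  proof -
    from nab obtain x y where xy: "x \<in> L" "y \<in> L" "h4_bracket x y \<noteq> h4_zero"
      unfolding non_abelian_def by blast
    obtain a b c d where x: "x = H4c a b c d" by (cases x)
    obtain a' b' c' d' where y: "y = H4c a' b' c' d'" by (cases y)
    have "b \<noteq> 0 \<or> b' \<noteq> 0" using xy(3) unfolding x y br h4_zero_def by auto
    then show ?thesis
    proof
      assume b: "b \<noteq> 0"
      have "H4c (a/b) 1 (c/b) (d/b) \<in> L"
        by (rule combE[of a b c d a b c d _ "1/b" 0]) (use xy x b in auto)
      then show ?thesis using that by blast
    next
      assume b: "b' \<noteq> 0"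
      have "H4c (a'/b') 1 (c'/b') (d'/b') \<in> L"
        by (rule combE[of a' b' c' d' a' b' c' d' _ "1/b'" 0]) (use xy y b in auto)
      then show ?thesis using that by blast
    qed
  qed
  have dec: "\<And>a b c d. H4c a b c d \<in> L \<Longrightarrow>
     (H4c 1 0 0 0 \<notin> L \<longrightarrow> a = b*pa) \<and>
     (H4c 0 0 1 1 \<notin> L \<longrightarrow> (c - b*pc) + (d - b*pd) = 0) \<and>
     (H4c 0 0 1 (-1) \<notin> L \<longrightarrow> c - b*pc = d - b*pd)"
  proof -
    fix a b c d
    assume xL: "H4c a b c d \<in> L"
    define t where "t = c - b*pc"
    define r where "r = d - b*pd"
    define s where "s = a - b*pa"
    have q: "H4c s 0 t r \<in> L"
      by (rule combE[OF xL pL, of _ 1 "-b"]) (simp add: s_def t_def r_def)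
    have b1: "H4c 0 0 (2*(1*r - pd*0)) (2*(1*t - pc*0)) \<in> L" using brH[OF pL q] .
    have h1: "H4c 0 0 r t \<in> L"
      by (rule combE[OF b1 b1, of _ "1/2" 0]) (simp add: char)
    have b2: "H4c 0 0 (2*(1*t - pd*0)) (2*(1*r - pc*0)) \<in> L" using brH[OF pL h1] .
    have h2: "H4c 0 0 t r \<in> L"
      by (rule combE[OF b2 b2, of _ "1/2" 0]) (simp add: char)
    have Ev: "H4c 0 0 ((t+r)/2) ((t+r)/2) \<in> L"
      by (rule combE[OF h2 h1, of _ "1/2" "1/2"]) (simp add: char field_simps)
    have Fv: "H4c 0 0 ((t-r)/2) ((r-t)/2) \<in> L"
      by (rule combE[OF h2 h1, of _ "1/2" "-1/2"]) (simp add: char field_simps)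
    have Sv: "H4c s 0 0 0 \<in> L"
      by (rule combE[OF q h2, of _ 1 "-1"]) simp
    have 1: "a = b*pa" if "H4c 1 0 0 0 \<notin> L"
    proof (rule ccontr)
      assume "a \<noteq> b*pa"
      then have "s \<noteq> 0" by (simp add: s_def)
      have "H4c 1 0 0 0 \<in> L"
        by (rule combE[OF Sv Sv, of _ "1/s" 0]) (simp add: \<open>s \<noteq> 0\<close>)
      then show False using that by blast
    qed
    have 2: "(c - b*pc) + (d - b*pd) = 0" if "H4c 0 0 1 1 \<notin> L"
    proof (rule ccontr)
      assume "(c - b*pc) + (d - b*pd) \<noteq> 0"
      then have nz: "t + r \<noteq> 0" by (simp add: t_def r_def)
      have nz2: "t*2 + r*2 \<noteq> 0" using nz char by (metis distrib_right mult_eq_0_iff)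
      have k: "(2/(t+r)) * ((t+r)/2) = 1" using nz nz2 char by simp
      have "H4c 0 0 1 1 \<in> L"
        by (rule combE[OF Ev Ev, of _ "2/(t+r)" 0]) (simp only: k mult_zero_left mult_zero_right add_0_right)
      then show False using that by blast
    qed
    have 3: "c - b*pc = d - b*pd" if "H4c 0 0 1 (-1) \<notin> L"
    proof (rule ccontr)
      assume "c - b*pc \<noteq> d - b*pd"
      then have nz: "t - r \<noteq> 0" by (simp add: t_def r_def)
      have k: "(2/(t-r)) * ((t-r)/2) = 1" using nz char by simp
      have k2: "(2/(t-r)) * ((r-t)/2) = -1" proof -
        have "(r-t)/2 = -((t-r)/2)" by (metis minus_diff_eq divide_minus_left)
        then show ?thesis by (simp only: mult_minus_right k)
      qed
      have "H4c 0 0 1 (-1) \<in> L"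
        by (rule combE[OF Fv Fv, of _ "2/(t-r)" 0]) (simp only: k k2 mult_zero_left mult_zero_right add_0_right)
      then show False using that by blast
    qed
    show "?thesis a b c d" using 1 2 3 by blast
  qed
  have cst: "h4_one = H4c 1 0 0 0" "h4_g = H4c 0 1 0 0" "h4_e = H4c 0 0 1 1" "h4_f = H4c 0 0 1 (-1)"
    by (simp_all add: h4_one_def h4_g_def h4_e_def h4_f_def h4_x_def h4_gx_def)
  have char4: "(4::'k) \<noteq> 0"
  proof -
    have "(4::'k) = 2*2" by simp
    then show ?thesis using char by (metis mult_eq_0_iff)
  qed
  have half: "1/2 + 1/2 = (1::'k)" using char by (simp add: add_divide_distrib[symmetric])
  have xv: "H4c 0 0 1 0 \<in> L" if Pe: "H4c 0 0 1 1 \<in> L" and Pf: "H4c 0 0 1 (-1) \<in> L"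
    by (rule combE[OF Pe Pf, of _ "1/2" "1/2"]) (simp add: half)
  have gxv: "H4c 0 0 0 1 \<in> L" if Pe: "H4c 0 0 1 1 \<in> L" and Pf: "H4c 0 0 1 (-1) \<in> L"
    by (rule combE[OF Pe Pf, of _ "1/2" "-1/2"]) (simp add: half)
  have p1: "H4c 0 1 pc pd \<in> L" if P1: "H4c 1 0 0 0 \<in> L"
    by (rule combE[OF pL P1, of _ 1 "-pa"]) simp
  have notall: False if P1: "H4c 1 0 0 0 \<in> L" and Pe: "H4c 0 0 1 1 \<in> L" and Pf: "H4c 0 0 1 (-1) \<in> L"
  proof -
    have p2: "H4c 0 1 0 pd \<in> L" by (rule combE[OF p1[OF P1] xv[OF Pe Pf], of _ 1 "-pc"]) simp
    have g: "H4c 0 1 0 0 \<in> L" by (rule combE[OF p2 gxv[OF Pe Pf], of _ 1 "-pd"]) simp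
    show False using A[of u v w] P1 g xv[OF Pe Pf] gxv[OF Pe Pf] Ldef by blast
  qed
  have c1: "L = span3 (H4c pa 1 0 0) (H4c 0 0 1 1) (H4c 0 0 1 (-1))"
    if nP1: "H4c 1 0 0 0 \<notin> L" and Pe: "H4c 0 0 1 1 \<in> L" and Pf: "H4c 0 0 1 (-1) \<in> L"
  proof
    have q1: "H4c pa 1 0 pd \<in> L" by (rule combE[OF pL xv[OF Pe Pf], of _ 1 "-pc"]) simp
    have q2: "H4c pa 1 0 0 \<in> L" by (rule combE[OF q1 gxv[OF Pe Pf], of _ 1 "-pd"]) simp
    show "span3 (H4c pa 1 0 0) (H4c 0 0 1 1) (H4c 0 0 1 (-1)) \<subseteq> L"
      using span3_sub[OF sub q2 Pe Pf] .
    show "L \<subseteq> span3 (H4c pa 1 0 0) (H4c 0 0 1 1) (H4c 0 0 1 (-1))"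
    proof
      fix y assume yL: "y \<in> L"
      obtain a b c d where y: "y = H4c a b c d" by (cases y)
      have a: "a = b*pa" using dec yL nP1 unfolding y by blast
      have "c = (c+d)/2 + (c-d)/2" "d = (c+d)/2 - (c-d)/2" using char char4 by (simp_all add: field_simps)
      then show "y \<in> span3 (H4c pa 1 0 0) (H4c 0 0 1 1) (H4c 0 0 1 (-1))"
        unfolding y span3_H
        by (intro CollectI exI[of _ b] exI[of _ "(c+d)/2"] exI[of _ "(c-d)/2"]) (simp add: a)
    qed
  qed
  have c2: "L = span3 (H4c 1 0 0 0) (H4c 0 1 ((pc+pd)/2) ((pc+pd)/2)) (H4c 0 0 1 (-1))"
    if P1: "H4c 1 0 0 0 \<in> L" and nPe: "H4c 0 0 1 1 \<notin> L" and Pf: "H4c 0 0 1 (-1) \<in> L"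
  proof
    have "pc - (pc-pd)/2 = (pc+pd)/2" "pd + (pc-pd)/2 = (pc+pd)/2" using char char4 by (simp_all add: field_simps)
    then have q: "H4c 0 1 ((pc+pd)/2) ((pc+pd)/2) \<in> L"
      by (intro combE[OF p1[OF P1] Pf, of _ 1 "-(pc-pd)/2"]) (simp add: char field_simps)
    show "span3 (H4c 1 0 0 0) (H4c 0 1 ((pc+pd)/2) ((pc+pd)/2)) (H4c 0 0 1 (-1)) \<subseteq> L"
      using span3_sub[OF sub P1 q Pf] .
    show "L \<subseteq> span3 (H4c 1 0 0 0) (H4c 0 1 ((pc+pd)/2) ((pc+pd)/2)) (H4c 0 0 1 (-1))"
    proof
      fix y assume yL: "y \<in> L"
      obtain a b c d where y: "y = H4c a b c d" by (cases y)
      have E: "(c - b*pc) + (d - b*pd) = 0" using dec yL nPe unfolding y by blast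
      have "c = b*((pc+pd)/2) + (c - b*((pc+pd)/2))" "d = b*((pc+pd)/2) - (c - b*((pc+pd)/2))"
      proof -
        have dE: "d = b*pc + b*pd - c" using E by (simp add: algebra_simps eq_neg_iff_add_eq_0[symmetric])
        show "c = b*((pc+pd)/2) + (c - b*((pc+pd)/2))" by simp
        show "d = b*((pc+pd)/2) - (c - b*((pc+pd)/2))" unfolding dE using char char4 by (simp add: field_simps)
      qed
      then show "y \<in> span3 (H4c 1 0 0 0) (H4c 0 1 ((pc+pd)/2) ((pc+pd)/2)) (H4c 0 0 1 (-1))"
        unfolding y span3_H
        by (intro CollectI exI[of _ a] exI[of _ b] exI[of _ "c - b*((pc+pd)/2)"]) simp
    qed
  qed
  have c3: "L = span3 (H4c 1 0 0 0) (H4c 0 1 ((pc-pd)/2) (-((pc-pd)/2))) (H4c 0 0 1 1)"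
    if P1: "H4c 1 0 0 0 \<in> L" and Pe: "H4c 0 0 1 1 \<in> L" and nPf: "H4c 0 0 1 (-1) \<notin> L"
  proof
    have "pc - (pc+pd)/2 = (pc-pd)/2" "pd - (pc+pd)/2 = -((pc-pd)/2)" using char char4 by (simp_all add: field_simps)
    then have q: "H4c 0 1 ((pc-pd)/2) (-((pc-pd)/2)) \<in> L"
      by (intro combE[OF p1[OF P1] Pe, of _ 1 "-(pc+pd)/2"]) (simp add: char field_simps)
    show "span3 (H4c 1 0 0 0) (H4c 0 1 ((pc-pd)/2) (-((pc-pd)/2))) (H4c 0 0 1 1) \<subseteq> L"
      using span3_sub[OF sub P1 q Pe] .
    show "L \<subseteq> span3 (H4c 1 0 0 0) (H4c 0 1 ((pc-pd)/2) (-((pc-pd)/2))) (H4c 0 0 1 1)"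
    proof
      fix y assume yL: "y \<in> L"
      obtain a b c d where y: "y = H4c a b c d" by (cases y)
      have F: "c - b*pc = d - b*pd" using dec yL nPf unfolding y by blast
      have "c = b*((pc-pd)/2) + (c - b*((pc-pd)/2))" "d = b*(-((pc-pd)/2)) + (c - b*((pc-pd)/2))"
      proof -
        have dF: "d = c - b*pc + b*pd" using F by (simp add: algebra_simps)
        show "c = b*((pc-pd)/2) + (c - b*((pc-pd)/2))" by simp
        show "d = b*(-((pc-pd)/2)) + (c - b*((pc-pd)/2))" unfolding dF using char char4 by (simp add: field_simps)
      qed
      then show "y \<in> span3 (H4c 1 0 0 0) (H4c 0 1 ((pc-pd)/2) (-((pc-pd)/2))) (H4c 0 0 1 1)"
        unfolding y span3_H
        by (intro CollectI exI[of _ a] exI[of _ b] exI[of _ "c - b*((pc-pd)/2)"]) simp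
    qed
  qed
  have twoD: "L \<subseteq> span2 (H4c pa 1 pc pd) z \<Longrightarrow> False" for z
    using B[OF ind] uvw by blast
  have c4a: False if nP1: "H4c 1 0 0 0 \<notin> L" and nPe: "H4c 0 0 1 1 \<notin> L"
  proof (rule twoD[of "H4c 0 0 1 (-1)"], rule subsetI)
    fix y assume yL: "y \<in> L"
    obtain a b c d where y: "y = H4c a b c d" by (cases y)
    have a: "a = b*pa" using dec yL nP1 unfolding y by blast
    have E: "(c - b*pc) + (d - b*pd) = 0" using dec yL nPe unfolding y by blast
    have dE: "d = b*pc + b*pd - c" using E by (simp add: algebra_simps eq_neg_iff_add_eq_0[symmetric])
    show "y \<in> span2 (H4c pa 1 pc pd) (H4c 0 0 1 (-1))"
      unfolding span2_def y
      by (intro CollectI exI[of _ b] exI[of _ "c - b*pc"]) (simp add: a dE)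
  qed
  have c4b: False if nP1: "H4c 1 0 0 0 \<notin> L" and nPf: "H4c 0 0 1 (-1) \<notin> L"
  proof (rule twoD[of "H4c 0 0 1 1"], rule subsetI)
    fix y assume yL: "y \<in> L"
    obtain a b c d where y: "y = H4c a b c d" by (cases y)
    have a: "a = b*pa" using dec yL nP1 unfolding y by blast
    have F: "c - b*pc = d - b*pd" using dec yL nPf unfolding y by blast
    have dF: "d = c - b*pc + b*pd" using F by (simp add: algebra_simps)
    show "y \<in> span2 (H4c pa 1 pc pd) (H4c 0 0 1 1)"
      unfolding span2_def y
      by (intro CollectI exI[of _ b] exI[of _ "c - b*pc"]) (simp add: a dF)
  qed
  have c4c: False if nPe: "H4c 0 0 1 1 \<notin> L" and nPf: "H4c 0 0 1 (-1) \<notin> L"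
  proof (rule twoD[of "H4c 1 0 0 0"], rule subsetI)
    fix y assume yL: "y \<in> L"
    obtain a b c d where y: "y = H4c a b c d" by (cases y)
    have E: "(c - b*pc) + (d - b*pd) = 0" using dec yL nPe unfolding y by blast
    have F: "c - b*pc = d - b*pd" using dec yL nPf unfolding y by blast
    have "2*(c - b*pc) = (c - b*pc) + (d - b*pd)" unfolding mult_2 using F by (rule arg_cong)
    then have "2*(c - b*pc) = 0" using E by (rule trans)
    then have "c - b*pc = 0" using char by (metis mult_eq_0_iff)
    then have c0: "c = b*pc" by simp
    have d0: "d = b*pd" using F \<open>c - b*pc = 0\<close> by simp
    show "y \<in> span2 (H4c pa 1 pc pd) (H4c 1 0 0 0)"
      unfolding span2_def y
      by (intro CollectI exI[of _ b] exI[of _ "a - b*pa"]) (simp add: c0 d0)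
  qed
  have idl: "H4c 0 0 1 1 \<in> L \<and> H4c 0 0 1 (-1) \<in> L" if I: "lie_ideal L"
  proof
    have br1: "h4_bracket (H4c 0 0 1 1) (H4c pa 1 pc pd) \<in> L" using I pL unfolding lie_ideal_def by blast
    then have h: "H4c 0 0 (2*(0*pd - 1*1)) (2*(0*pc - 1*1)) \<in> L" by (simp only: br)
    show "H4c 0 0 1 1 \<in> L" by (rule combE[OF h h, of _ "-1/2" 0]) (simp add: char)
    have br2: "h4_bracket (H4c 0 0 1 (-1)) (H4c pa 1 pc pd) \<in> L" using I pL unfolding lie_ideal_def by blast
    then have h2: "H4c 0 0 (2*(0*pd - (-1)*1)) (2*(0*pc - 1*1)) \<in> L" by (simp only: br)
    show "H4c 0 0 1 (-1) \<in> L" by (rule combE[OF h2 h2, of _ "1/2" 0]) (simp add: char)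
  qed
  have t1: "h4_add (h4_smult \<alpha> h4_one) h4_g = H4c \<alpha> 1 0 0" for \<alpha> :: 'k by (simp add: cst)
  have t2: "h4_add h4_g (h4_smult \<gamma> h4_e) = H4c 0 1 \<gamma> \<gamma>" for \<gamma> :: 'k by (simp add: cst)
  have t3: "h4_add h4_g (h4_smult \<gamma> h4_f) = H4c 0 1 \<gamma> (-\<gamma>)" for \<gamma> :: 'k by (simp add: cst)
  have part1: "(\<exists>\<alpha>. L = span3 (h4_add (h4_smult \<alpha> h4_one) h4_g) h4_e h4_f)
          \<or> (\<exists>\<gamma>. L = span3 h4_one (h4_add h4_g (h4_smult \<gamma> h4_e)) h4_f)
          \<or> (\<exists>\<gamma>. L = span3 h4_one (h4_add h4_g (h4_smult \<gamma> h4_f)) h4_e)"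
  proof (cases "H4c 1 0 0 0 \<in> L")
    case P1: True
    show ?thesis
    proof (cases "H4c 0 0 1 1 \<in> L")
      case Pe: True
      then have nPf: "H4c 0 0 1 (-1) \<notin> L" using notall P1 by blast
      have "L = span3 (H4c 1 0 0 0) (H4c 0 1 ((pc-pd)/2) (-((pc-pd)/2))) (H4c 0 0 1 1)"
        using c3[OF P1 Pe nPf] .
      then show ?thesis unfolding t1 t2 t3 unfolding cst(1,3,4) by (intro disjI2 exI)
    next
      case nPe: False
      have Pf: "H4c 0 0 1 (-1) \<in> L" using c4c nPe by blast
      have "L = span3 (H4c 1 0 0 0) (H4c 0 1 ((pc+pd)/2) ((pc+pd)/2)) (H4c 0 0 1 (-1))"
        using c2[OF P1 nPe Pf] .
      then show ?thesis unfolding t1 t2 t3 unfolding cst(1,3,4) by (intro disjI2 disjI1 exI)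
    qed
  next
    case nP1: False
    have Pe: "H4c 0 0 1 1 \<in> L" using c4a nP1 by blast
    have Pf: "H4c 0 0 1 (-1) \<in> L" using c4b nP1 by blast
    have "L = span3 (H4c pa 1 0 0) (H4c 0 0 1 1) (H4c 0 0 1 (-1))" using c1[OF nP1 Pe Pf] .
    then show ?thesis unfolding t1 t2 t3 unfolding cst(1,3,4) by (intro disjI1 exI)
  qed
  have part2: "lie_ideal L \<longrightarrow>
            (L = span3 h4_one h4_e h4_f
             \<or> (\<exists>\<alpha>. L = span3 (h4_add (h4_smult \<alpha> h4_one) h4_g) h4_e h4_f))"
    unfolding t1 unfolding cst(1,3,4)
  proof
    assume I: "lie_ideal L"
    have Pe: "H4c 0 0 1 1 \<in> L" and Pf: "H4c 0 0 1 (-1) \<in> L" using idl[OF I] by auto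
    have nP1: "H4c 1 0 0 0 \<notin> L" using notall Pe Pf by blast
    have "L = span3 (H4c pa 1 0 0) (H4c 0 0 1 1) (H4c 0 0 1 (-1))" using c1[OF nP1 Pe Pf] .
    then show "L = span3 (H4c 1 0 0 0) (H4c 0 0 1 1) (H4c 0 0 1 (-1)) \<or>
      (\<exists>\<alpha>. L = span3 (H4c \<alpha> 1 0 0) (H4c 0 0 1 1) (H4c 0 0 1 (-1)))" by (intro disjI2 exI)
  qed
  show ?thesis using part1 part2 by blast
qed

end
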